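(* There exists a constant $h>0$ (depending only on $x$ and $d_{\max}$) such that for every $k\ge t$ with $d_{\min}+1\le n-k\le d_{\max}+1$, writing $\ell=n-k$, we have $a_{k_1,\dots,k_x}<h\cdot n^{-\ell}$ for every tuple $(k_1,\dots,k_x)$ of integers with $t_i\le k_i\le a_i$ and $\sum_i k_i=k$, and $\alpha_k\le\frac{h}{n^2}$.
   Context: Random graph model: $V$ is a set of $n$ vertices, $B\subseteq V$ a target set with $|B|=t$, each $v\in V$ has a prescribed out-degree $d_v$ with $2\le d_{\min}\le d_v\le d_{\max}$ (constants independent of $n$), and for each $v$ independently its out-neighbour set is chosen uniformly among all $d_v$-element subsets of $V$. Let $d_1,\dots,d_x$ be the distinct out-degrees, $a_i$ the number of vertices of out-degree $d_i$, $t_i$ the number of vertices of $B$ of out-degree $d_i$. For $S\supseteq B$ containing $k_i$ vertices of out-degree $d_i$, $R(k_1,\dots,k_x)$ is the probability that every vertex of $S$ has a directed path to $B$ lying inside $S$. For $k=\sum_i k_i$ with $t_i\le k_i\le a_i$, $a_{k_1,\dots,k_x}=\left(\prod_{i=1}^x\binom{a_i-t_i}{k_i-t_i}\left(\binom{n-k}{d_i}/\binom{n}{d_i}\right)^{a_i-k_i}\right)R(k_1,\dots,k_x)$, with the factor $(\binom{n-k}{d_i}/\binom{n}{d_i})^{a_i-k_i}$ equal to $1$ when $a_i=k_i$ and $\binom{m}{d}=0$ for $d>m$, and $\alpha_k=\sum_{\sum_i k_i=k,\ t_i\le k_i\le a_i}a_{k_1,\dots,k_x}$. *)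

theory Defs
  imports "HOL-Probability.Probability"
begin

text \<open>Vertices are natural numbers; V is the finite vertex set, B the target set,
  d the out-degree function. Distinct out-degrees are indexed by their value
  (the set degs V d), so a tuple (k_1,...,k_x) is a function kk on degs V d.\<close>

definition degs :: "nat set \<Rightarrow> (nat \<Rightarrow> nat) \<Rightarrow> nat set" where
  "degs V d = d ` V"

definition acnt :: "nat set \<Rightarrow> (nat \<Rightarrow> nat) \<Rightarrow> nat \<Rightarrow> nat" where
  "acnt V d \<delta> = card {v \<in> V. d v = \<delta>}"

definition tcnt :: "nat set \<Rightarrow> (nat \<Rightarrow> nat) \<Rightarrow> nat \<Rightarrow> nat" where
  "tcnt B d \<delta> = card {v \<in> B. d v = \<delta>}"

definition rand_graph :: "nat set \<Rightarrow> (nat \<Rightarrow> nat) \<Rightarrow> (nat \<Rightarrow> nat set) pmf" where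
  "rand_graph V d = Pi_pmf V {} (\<lambda>v. pmf_of_set {A. A \<subseteq> V \<and> card A = d v})"

definition reaches_in :: "nat set \<Rightarrow> (nat \<Rightarrow> nat set) \<Rightarrow> nat \<Rightarrow> nat set \<Rightarrow> bool" where
  "reaches_in S G v B \<longleftrightarrow> (\<exists>b\<in>B. (v, b) \<in> {(u, w). u \<in> S \<and> w \<in> S \<and> w \<in> G u}\<^sup>*)"

definition R_set :: "nat set \<Rightarrow> nat set \<Rightarrow> (nat \<Rightarrow> nat) \<Rightarrow> nat set \<Rightarrow> real" where
  "R_set V B d S = measure_pmf.prob (rand_graph V d) {G. \<forall>v\<in>S. reaches_in S G v B}"

text \<open>R(k_1,...,k_x): the probability for a set S with B \<subseteq> S \<subseteq> V having kk \<delta> vertices of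
  out-degree \<delta> (well defined by symmetry of the model).\<close>
definition R :: "nat set \<Rightarrow> nat set \<Rightarrow> (nat \<Rightarrow> nat) \<Rightarrow> (nat \<Rightarrow> nat) \<Rightarrow> real" where
  "R V B d kk = R_set V B d
     (SOME S. B \<subseteq> S \<and> S \<subseteq> V \<and> (\<forall>\<delta>\<in>degs V d. card {v \<in> S. d v = \<delta>} = kk \<delta>))"

definition acoef :: "nat set \<Rightarrow> nat set \<Rightarrow> (nat \<Rightarrow> nat) \<Rightarrow> (nat \<Rightarrow> nat) \<Rightarrow> real" where
  "acoef V B d kk =
     (\<Prod>\<delta>\<in>degs V d.
        real ((acnt V d \<delta> - tcnt B d \<delta>) choose (kk \<delta> - tcnt B d \<delta>)) *
        (real ((card V - sum kk (degs V d)) choose \<delta>) / real (card V choose \<delta>))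
          ^ (acnt V d \<delta> - kk \<delta>))
     * R V B d kk"

definition tuples :: "nat set \<Rightarrow> nat set \<Rightarrow> (nat \<Rightarrow> nat) \<Rightarrow> nat \<Rightarrow> (nat \<Rightarrow> nat) set" where
  "tuples V B d k = {kk \<in> PiE (degs V d) (\<lambda>\<delta>. {tcnt B d \<delta>..acnt V d \<delta>}).
                       sum kk (degs V d) = k}"

definition alpha :: "nat set \<Rightarrow> nat set \<Rightarrow> (nat \<Rightarrow> nat) \<Rightarrow> nat \<Rightarrow> real" where
  "alpha V B d k = (\<Sum>kk\<in>tuples V B d k. acoef V B d kk)"

end

theory Submission imports Defs begin

lemma factor_bound:
  fixes n a t kk l \<delta> D :: nat
  assumes "t \<le> kk" "kk \<le> a" "a \<le> n" "2 \<le> \<delta>" "\<delta> \<le> D" "\<delta> \<le> n" "l \<le> D+1" "1 \<le> n"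
  shows "real ((a - t) choose (kk - t)) * (real (l choose \<delta>) / real (n choose \<delta>))^(a-kk)
         \<le> (real (2^(D+1) * D^D) / real n)^(a-kk)"
proof -
  define C where "C = real (2^(D+1) * D^D)"
  define m where "m = a - kk"
  have e: "(a-t)-(kk-t) = m" using assms unfolding m_def by arith
  have "(a-t) choose (kk-t) = (a-t) choose ((a-t)-(kk-t))"
    by (rule binomial_symmetric) (use assms in arith)
  then have b1: "(a - t) choose (kk - t) = (a-t) choose m" unfolding e .
  have b2: "real ((a-t) choose m) \<le> real n ^ m"
  proof (cases "m \<le> a - t")
    case True
    then have "(a-t) choose m \<le> (a-t)^m" by (rule binomial_le_pow)
    also have "\<dots> \<le> n^m" using assms by (intro power_mono) auto
    finally show ?thesis by (metis of_nat_le_iff of_nat_power)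
  next
    case False then have "(a-t) choose m = 0" by (intro binomial_eq_0) simp
    then show ?thesis by (simp del: binomial_eq_0_iff)
  qed
  have npos: "real n > 0" using assms by simp
  have bn: "(real n / real \<delta>)^\<delta> \<le> real (n choose \<delta>)"
    using binomial_ge_n_over_k_pow_k[of \<delta> n] assms by simp
  have "(real n / real \<delta>)^\<delta> = real n ^ \<delta> / real \<delta> ^ \<delta>" by (simp add: power_divide)
  also have "\<dots> \<ge> real n ^ \<delta> / real D ^ D"
  proof -
    have "real \<delta> ^ \<delta> \<le> real D ^ \<delta>" using assms by (intro power_mono) auto
    also have "\<dots> \<le> real D ^ D" using assms by (intro power_increasing) auto
    finally have "real \<delta> ^ \<delta> \<le> real D ^ D" .
    moreover have "real \<delta> ^ \<delta> > 0" using assms by simp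
    moreover have "real D ^ D > 0" using assms by simp
    ultimately show ?thesis using npos by (intro divide_left_mono mult_pos_pos) auto
  qed
  also have "real n ^ \<delta> / real D ^ D \<ge> real n ^ 2 / real D ^ D"
    using assms by (intro divide_right_mono power_increasing) auto
  finally have bn2: "real n ^ 2 / real D ^ D \<le> real (n choose \<delta>)" using bn by linarith
  have Dpos: "real D ^ D > 0" using assms by simp
  have bl: "real (l choose \<delta>) \<le> 2^(D+1)"
  proof -
    have "l choose \<delta> \<le> 2^l" by (rule binomial_le_pow2)
    also have "(2::nat)^l \<le> 2^(D+1)" using assms by (intro power_increasing) auto
    finally show ?thesis by (metis of_nat_le_iff of_nat_numeral of_nat_power)
  qed
  have r: "real (l choose \<delta>) / real (n choose \<delta>) \<le> C / real n ^ 2"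
  proof -
    have p: "real n ^ 2 / real D ^ D > 0" using npos Dpos by simp
    have "real (l choose \<delta>) / real (n choose \<delta>) \<le> 2^(D+1) / (real n ^ 2 / real D ^ D)"
      using bl bn2 p by (intro frac_le) auto
    also have "\<dots> = C / real n ^ 2" unfolding C_def using npos Dpos by (simp add: field_simps)
    finally show ?thesis .
  qed
  have "real ((a - t) choose (kk - t)) * (real (l choose \<delta>) / real (n choose \<delta>))^m
        \<le> real n ^ m * (C / real n ^ 2)^m"
    unfolding b1 using b2 r by (intro mult_mono power_mono) auto
  also have "\<dots> = (real n * (C / real n ^ 2))^m" by (rule power_mult_distrib[symmetric])
  also have "real n * (C / real n ^ 2) = C / real n" using npos by (simp add: power2_eq_square)
  finally show ?thesis unfolding m_def C_def .
qed

lemma sum_acnt: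
  assumes "finite V"
  shows "sum (acnt V d) (degs V d) = card V"
proof -
  have "card V = (\<Sum>v\<in>V. 1::nat)" by simp
  also have "\<dots> = (\<Sum>y\<in>d ` V. \<Sum>v\<in>{x\<in>V. d x = y}. 1::nat)"
    using assms by (rule sum.image_gen)
  finally show ?thesis unfolding degs_def acnt_def by simp
qed

lemma R_bounds: "0 \<le> R V B d kk" "R V B d kk \<le> 1"
  unfolding R_def R_set_def by (simp_all add: measure_pmf.prob_le_1)

lemma acoef_bound:
  assumes fin: "finite V" and ne: "V \<noteq> {}"
    and dv: "\<forall>v\<in>V. 2 \<le> d v \<and> d v \<le> card V"
    and mx: "Max (degs V d) = D"
    and kk: "\<forall>\<delta>\<in>degs V d. tcnt B d \<delta> \<le> kk \<delta> \<and> kk \<delta> \<le> acnt V d \<delta>"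
    and sk: "sum kk (degs V d) = k"
    and lD: "card V - k \<le> D + 1"
  shows "acoef V B d kk \<le> real (2^(D+1) * D^D) ^ (D+1) / real (card V) ^ (card V - k)"
proof -
  define n where "n = card V"
  define C where "C = real (2^(D+1) * D^D)"
  have fd: "finite (degs V d)" using fin unfolding degs_def by simp
  have nd: "degs V d \<noteq> {}" using ne unfolding degs_def by simp
  have n1: "1 \<le> n" using fin ne unfolding n_def by (simp add: Suc_le_eq card_gt_0_iff)
  have dD: "\<delta> \<le> D" if "\<delta> \<in> degs V d" for \<delta> using Max_ge[OF fd that] mx by simp
  have d2: "2 \<le> \<delta> \<and> \<delta> \<le> n" if "\<delta> \<in> degs V d" for \<delta> using that dv unfolding degs_def n_def by auto
  have D2: "2 \<le> D" using nd dD d2 by fastforce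
  have an: "acnt V d \<delta> \<le> n" for \<delta> unfolding acnt_def n_def using fin by (intro card_mono) auto
  have sm: "(\<Sum>\<delta>\<in>degs V d. acnt V d \<delta> - kk \<delta>) = n - k"
    using sum_subtractf_nat[of "degs V d" kk "acnt V d"] kk sk sum_acnt[OF fin, of d] n_def by auto
  define P where "P = (\<Prod>\<delta>\<in>degs V d.
        real ((acnt V d \<delta> - tcnt B d \<delta>) choose (kk \<delta> - tcnt B d \<delta>)) *
        (real ((card V - sum kk (degs V d)) choose \<delta>) / real (card V choose \<delta>))
          ^ (acnt V d \<delta> - kk \<delta>))"
  have P0: "0 \<le> P" unfolding P_def by (intro prod_nonneg) auto
  have "P \<le> (\<Prod>\<delta>\<in>degs V d. (C / real n) ^ (acnt V d \<delta> - kk \<delta>))"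
    unfolding P_def
  proof (intro prod_mono conjI)
    fix \<delta> assume h: "\<delta> \<in> degs V d"
    show "0 \<le> real ((acnt V d \<delta> - tcnt B d \<delta>) choose (kk \<delta> - tcnt B d \<delta>)) *
        (real ((card V - sum kk (degs V d)) choose \<delta>) / real (card V choose \<delta>))
          ^ (acnt V d \<delta> - kk \<delta>)" by auto
    show "real ((acnt V d \<delta> - tcnt B d \<delta>) choose (kk \<delta> - tcnt B d \<delta>)) *
        (real ((card V - sum kk (degs V d)) choose \<delta>) / real (card V choose \<delta>))
          ^ (acnt V d \<delta> - kk \<delta>) \<le> (C / real n) ^ (acnt V d \<delta> - kk \<delta>)"
      unfolding C_def n_def sk
      using factor_bound[of "tcnt B d \<delta>" "kk \<delta>" "acnt V d \<delta>" n \<delta> D "card V - k"]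
        kk h an d2 dD lD n1 unfolding n_def by auto
  qed
  also have "\<dots> = (C / real n) ^ (n - k)" by (metis sm power_sum)
  also have "\<dots> = C ^ (n-k) / real n ^ (n-k)" by (simp add: power_divide)
  also have "\<dots> \<le> C ^ (D+1) / real n ^ (n-k)"
  proof -
    have "0 < (2::nat)^(D+1) * D^D" using D2 by simp
    then have "1 \<le> C" unfolding C_def by (metis Suc_le_eq of_nat_1 of_nat_le_iff One_nat_def)
    then have "C ^ (n-k) \<le> C ^ (D+1)" using lD n_def by (intro power_increasing) auto
    then show ?thesis using n1 by (intro divide_right_mono) auto
  qed
  finally have Pb: "P \<le> C ^ (D+1) / real n ^ (n-k)" .
  have "acoef V B d kk = P * R V B d kk" unfolding acoef_def P_def by simp
  also have "\<dots> \<le> P" using P0 R_bounds[of V B d kk] by (simp add: mult_left_le)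
  finally show ?thesis using Pb unfolding C_def n_def by simp
qed

theorem lemma17:
  fixes X Dmax :: nat
  shows "\<exists>h>0. \<forall>(V::nat set) (B::nat set) (d::nat \<Rightarrow> nat).
     finite V \<and> V \<noteq> {} \<and> B \<subseteq> V \<and>
     (\<forall>v\<in>V. 2 \<le> d v \<and> d v \<le> card V) \<and>
     card (degs V d) = X \<and> Max (degs V d) = Dmax \<longrightarrow>
     (\<forall>k::nat. card B \<le> k \<and> Min (degs V d) + 1 \<le> card V - k \<and> card V - k \<le> Dmax + 1 \<longrightarrow>
        (\<forall>kk. (\<forall>\<delta>\<in>degs V d. tcnt B d \<delta> \<le> kk \<delta> \<and> kk \<delta> \<le> acnt V d \<delta>) \<and>
               sum kk (degs V d) = k \<longrightarrow>
               acoef V B d kk < h / real (card V) ^ (card V - k)) \<and>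
        alpha V B d k \<le> h / real (card V) ^ 2)"
proof -
  define C where "C = real (2^(Dmax+1) * Dmax^Dmax)"
  define h where "h = C ^ (Dmax+1) * real (Dmax+2) ^ X + 1"
  have C0: "0 \<le> C" unfolding C_def by simp
  have "0 \<le> C ^ (Dmax+1) * real (Dmax+2) ^ X" using C0 by (intro mult_nonneg_nonneg zero_le_power) auto
  then have h0: "h > 0" unfolding h_def by linarith
  show ?thesis
  proof (rule exI[of _ h], rule conjI[OF h0], intro allI impI)
    fix V B :: "nat set" and d :: "nat \<Rightarrow> nat" and k :: nat
    assume A: "finite V \<and> V \<noteq> {} \<and> B \<subseteq> V \<and>
     (\<forall>v\<in>V. 2 \<le> d v \<and> d v \<le> card V) \<and>
     card (degs V d) = X \<and> Max (degs V d) = Dmax"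
    assume K: "card B \<le> k \<and> Min (degs V d) + 1 \<le> card V - k \<and> card V - k \<le> Dmax + 1"
    define n where "n = card V"
    have fin: "finite V" and ne: "V \<noteq> {}" using A by blast+
    have fd: "finite (degs V d)" using fin unfolding degs_def by simp
    have nd: "degs V d \<noteq> {}" using ne unfolding degs_def by simp
    have n1: "1 \<le> n" using fin ne unfolding n_def by (simp add: Suc_le_eq card_gt_0_iff)
    have npos: "real n > 0" using n1 by simp
    have m2: "2 \<le> Min (degs V d)"
    proof -
      have "Min (degs V d) \<in> d ` V" using Min_in[OF fd nd] unfolding degs_def .
      then obtain v where v: "v \<in> V" "Min (degs V d) = d v" by blast
      have "\<forall>v\<in>V. 2 \<le> d v \<and> d v \<le> card V" using A by blast
      then show ?thesis using v by simp
    qed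
    have l2: "2 \<le> n - k" using K m2 n_def by linarith
    have Kb: "acoef V B d kk \<le> C ^ (Dmax+1) / real n ^ (n - k)"
      if "(\<forall>\<delta>\<in>degs V d. tcnt B d \<delta> \<le> kk \<delta> \<and> kk \<delta> \<le> acnt V d \<delta>) \<and> sum kk (degs V d) = k"
      for kk
    proof -
      have dv: "\<forall>v\<in>V. 2 \<le> d v \<and> d v \<le> card V" and mx: "Max (degs V d) = Dmax" using A by blast+
      have lD: "card V - k \<le> Dmax + 1" using K by blast
      have "acoef V B d kk \<le> real (2^(Dmax+1) * Dmax^Dmax) ^ (Dmax+1) / real (card V) ^ (card V - k)"
        using that by (intro acoef_bound[OF fin ne dv mx _ _ lD]) blast+
      then show ?thesis unfolding C_def n_def .
    qed
    have Cle: "C ^ (Dmax+1) < h" unfolding h_def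
    proof -
      have "1 \<le> real (Dmax+2) ^ X" by simp
      then have "C ^ (Dmax+1) * 1 \<le> C ^ (Dmax+1) * real (Dmax+2) ^ X"
        using C0 by (intro mult_left_mono) auto
      then show "C ^ (Dmax+1) < C ^ (Dmax+1) * real (Dmax+2) ^ X + 1" by simp
    qed
    have P1: "\<forall>kk. (\<forall>\<delta>\<in>degs V d. tcnt B d \<delta> \<le> kk \<delta> \<and> kk \<delta> \<le> acnt V d \<delta>) \<and>
               sum kk (degs V d) = k \<longrightarrow>
               acoef V B d kk < h / real (card V) ^ (card V - k)"
    proof (intro allI impI)
      fix kk assume H: "(\<forall>\<delta>\<in>degs V d. tcnt B d \<delta> \<le> kk \<delta> \<and> kk \<delta> \<le> acnt V d \<delta>) \<and> sum kk (degs V d) = k"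
      have "C ^ (Dmax+1) / real n ^ (n - k) < h / real n ^ (n - k)"
        using Cle npos by (intro divide_strict_right_mono) auto
      then show "acoef V B d kk < h / real (card V) ^ (card V - k)"
        using Kb[OF H] unfolding n_def by linarith
    qed
    have sub: "tuples V B d k \<subseteq> PiE (degs V d) (\<lambda>\<delta>. {acnt V d \<delta> - (n-k)..acnt V d \<delta>})"
    proof
      fix kk assume T: "kk \<in> tuples V B d k"
      then have kp: "kk \<in> PiE (degs V d) (\<lambda>\<delta>. {tcnt B d \<delta>..acnt V d \<delta>})" and
        sk: "sum kk (degs V d) = k" unfolding tuples_def by auto
      have le: "kk \<delta> \<le> acnt V d \<delta>" if "\<delta> \<in> degs V d" for \<delta> using kp that by auto
      have sm: "(\<Sum>\<delta>\<in>degs V d. acnt V d \<delta> - kk \<delta>) = n - k"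
        using sum_subtractf_nat[of "degs V d" kk "acnt V d"] le sk sum_acnt[OF fin, of d] n_def by auto
      show "kk \<in> PiE (degs V d) (\<lambda>\<delta>. {acnt V d \<delta> - (n-k)..acnt V d \<delta>})"
      proof (rule PiE_I)
        fix \<delta> assume dd: "\<delta> \<in> degs V d"
        have "acnt V d \<delta> - kk \<delta> \<le> n - k"
          using member_le_sum[of \<delta> "degs V d" "\<lambda>\<delta>. acnt V d \<delta> - kk \<delta>"] dd fd sm by simp
        then show "kk \<delta> \<in> {acnt V d \<delta> - (n-k)..acnt V d \<delta>}" using le[OF dd] by auto
      next
        fix \<delta> assume "\<delta> \<notin> degs V d" then show "kk \<delta> = undefined" using kp by (auto simp: PiE_def extensional_def)
      qed
    qed
    have "card (tuples V B d k) \<le> card (PiE (degs V d) (\<lambda>\<delta>. {acnt V d \<delta> - (n-k)..acnt V d \<delta>}))"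
      using sub fd by (intro card_mono) (auto intro: finite_PiE)
    also have "\<dots> = (\<Prod>\<delta>\<in>degs V d. card {acnt V d \<delta> - (n-k)..acnt V d \<delta>})" using fd by (rule card_PiE)
    also have "\<dots> \<le> (\<Prod>\<delta>\<in>degs V d. Dmax + 2)"
    proof (intro prod_mono conjI)
      fix \<delta>
      have lD: "n - k \<le> Dmax + 1" using K n_def by blast
      show "card {acnt V d \<delta> - (n-k)..acnt V d \<delta>} \<le> Dmax + 2" using lD by simp
    qed simp
    also have "\<dots> = (Dmax+2) ^ X" using A by (simp only: prod_constant)
    finally have ct: "card (tuples V B d k) \<le> (Dmax+2)^X" .
    have "alpha V B d k \<le> real (card (tuples V B d k)) * (C ^ (Dmax+1) / real n ^ (n - k))"
      unfolding alpha_def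
    proof (rule sum_bounded_above)
      fix kk assume "kk \<in> tuples V B d k"
      then show "acoef V B d kk \<le> C ^ (Dmax+1) / real n ^ (n - k)"
        by (intro Kb) (auto simp: tuples_def)
    qed
    also have "\<dots> \<le> real ((Dmax+2)^X) * (C ^ (Dmax+1) / real n ^ 2)"
    proof (intro mult_mono)
      show "real (card (tuples V B d k)) \<le> real ((Dmax+2)^X)" using ct by (simp only: of_nat_le_iff)
      have "real n ^ 2 \<le> real n ^ (n-k)" using n1 l2 by (intro power_increasing) auto
      then show "C ^ (Dmax+1) / real n ^ (n - k) \<le> C ^ (Dmax+1) / real n ^ 2"
        using C0 npos by (intro divide_left_mono) auto
    qed (use C0 in auto)
    also have "\<dots> \<le> h / real n ^ 2"
    proof -
      have "real ((Dmax+2)^X) * C ^ (Dmax+1) \<le> h" unfolding h_def by (simp add: mult.commute)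
      then show ?thesis using npos by (simp add: divide_right_mono)
    qed
    finally have P2: "alpha V B d k \<le> h / real (card V) ^ 2" unfolding n_def .
    from P1 P2 show "(\<forall>kk. (\<forall>\<delta>\<in>degs V d. tcnt B d \<delta> \<le> kk \<delta> \<and> kk \<delta> \<le> acnt V d \<delta>) \<and>
               sum kk (degs V d) = k \<longrightarrow>
               acoef V B d kk < h / real (card V) ^ (card V - k)) \<and>
        alpha V B d k \<le> h / real (card V) ^ 2" by (rule conjI)
  qed
qed

end
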